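(* Let $(\Omega(\mathcal A),\wedge,[\cdot,\cdot],\mathbf d)$ be a differential Gerstenhaber superalgebra, and let $(\Omega^1(\mathcal A),\llbracket\cdot,\cdot\rrbracket,\rho)$ be the associated Lie superalgebroid, $\llbracket\alpha,\beta\rrbracket=[\alpha,\beta]$, $\rho(\alpha)=[\alpha,\cdot]|_{\mathcal A}$. Then $\rho$ is skew-supersymmetric, $\llbracket\mathbf d f,\mathbf d g\rrbracket=\mathbf d(\rho(\mathbf d f)(g))$ for all $f,g\in\mathcal A$, and consequently the bracket has the form $$\llbracket\alpha,\beta\rrbracket=\rho(\alpha)\lrcorner\mathbf d\beta-(-1)^{p(\alpha)p(\beta)}\rho(\beta)\lrcorner\mathbf d\alpha+\mathbf d\big(\beta(\rho(\alpha))\big),$$ and the superalgebroid is of Poisson type.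
   Context: $\mathcal A$ is a $\mathbb Z$-graded, associative, graded-commutative unital real algebra, regarded as supercommutative with parity $p$ = degree mod 2. $\operatorname{Der}(\mathcal A)$: graded derivations. $\Omega^1(\mathcal A)=\ker(\mathbf m:\mathcal A\otimes\mathcal A\to\mathcal A)$ with $\mathbf d a=a\otimes1-1\otimes a$, generated over $\mathcal A$ by $\mathbf d\mathcal A$, paired with $\operatorname{Der}(\mathcal A)$ via $\langle D,\mathbf d a\rangle=D(a)$, written $\alpha(D)$; $\Omega(\mathcal A)$ is the algebra of superforms generated over $\mathcal A$ by $\Omega^1(\mathcal A)$, bigraded by form degree $\deg$ and parity $p$, with exterior superderivative $\mathbf d$ ($\mathbf d^2=0$) and interior product $D\lrcorner$. A Gerstenhaber superbracket on $\Omega(\mathcal A)$ satisfies, for bihomogeneous elements, $[\alpha,\beta]=-(-1)^{(\deg\alpha-1)(\deg\beta-1)+p(\alpha)p(\beta)}[\beta,\alpha]$, $[\alpha,[\beta,\gamma]]=[[\alpha,\beta],\gamma]+(-1)^{(\deg\alpha-1)(\deg\beta-1)+p(\alpha)p(\beta)}[\beta,[\alpha,\gamma]]$, $[\alpha,\beta\wedge\gamma]=[\alpha,\beta]\wedge\gamma+(-1)^{(\deg\alpha-1)\deg\beta+p(\alpha)p(\beta)}\beta\wedge[\alpha,\gamma]$, and has form degree $-1$; it is differential if $\mathbf d[\alpha,\beta]=[\mathbf d\alpha,\beta]+(-1)^{\deg\alpha-1}[\alpha,\mathbf d\beta]$. A Lie superalgebroid on $\Omega^1(\mathcal A)$ is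 an even $\mathcal A$-linear anchor $\rho:\Omega^1(\mathcal A)\to\operatorname{Der}(\mathcal A)$ with a bilinear bracket making $\Omega^1(\mathcal A)$ a Lie superalgebra and satisfying $\llbracket\alpha,f\beta\rrbracket=\rho(\alpha)(f)\beta+(-1)^{p(\alpha)p(f)}f\llbracket\alpha,\beta\rrbracket$. The anchor is skew-supersymmetric if $\alpha(\rho(\beta))=-(-1)^{p(\alpha)p(\beta)}\beta(\rho(\alpha))$. A Lie superalgebroid is of Poisson type if its anchor is skew-supersymmetric and $\{f,g\}:=\rho(\mathbf d f)(g)$ satisfies $\{f,\{g,h\}\}=\{\{f,g\},h\}+(-1)^{p(f)p(g)}\{g,\{f,h\}\}$ (equivalently $[\rho(\mathbf d f),\rho(\mathbf d g)]=\rho(\mathbf d\{f,g\})$). *)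

theory Defs
  imports Complex_Main
begin

definition msgn :: "int \<Rightarrow> real" where
  "msgn e = (if even e then 1 else -1)"

text \<open>Parity as an integer (False = even = 0, True = odd = 1).\<close>
definition pint :: "bool \<Rightarrow> int" where
  "pint b = (if b then 1 else 0)"

text \<open>A bigrading of the superform algebra: B k b is the space of superforms of
  form degree k and parity b.\<close>
type_synonym 'w bigrading = "nat \<Rightarrow> bool \<Rightarrow> 'w set"

definition Alg :: "'w::real_vector bigrading \<Rightarrow> 'w set" where
  "Alg B = {x + y | x y. x \<in> B 0 False \<and> y \<in> B 0 True}"

definition Om1 :: "'w::real_vector bigrading \<Rightarrow> 'w set" where
  "Om1 B = {x + y | x y. x \<in> B 1 False \<and> y \<in> B 1 True}"

definition bigraded_space :: "'w::real_vector bigrading \<Rightarrow> bool" where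
  "bigraded_space B \<longleftrightarrow>
     (\<forall>k b. subspace (B k b)) \<and>
     (\<forall>w. \<exists>!c :: nat \<times> bool \<Rightarrow> 'w.
        finite {p. c p \<noteq> 0} \<and> (\<forall>k b. c (k, b) \<in> B k b) \<and>
        w = (\<Sum>p\<in>{p. c p \<noteq> 0}. c p))"

definition sf_wedge :: "'w::real_vector bigrading \<Rightarrow> ('w \<Rightarrow> 'w \<Rightarrow> 'w) \<Rightarrow> 'w \<Rightarrow> bool" where
  "sf_wedge B wed one \<longleftrightarrow>
     (\<forall>x y z. wed (x + y) z = wed x z + wed y z) \<and>
     (\<forall>x y z. wed x (y + z) = wed x y + wed x z) \<and>
     (\<forall>r x y. wed (r *\<^sub>R x) y = r *\<^sub>R wed x y) \<and>
     (\<forall>r x y. wed x (r *\<^sub>R y) = r *\<^sub>R wed x y) \<and>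
     (\<forall>x y z. wed (wed x y) z = wed x (wed y z)) \<and>
     one \<in> B 0 False \<and> (\<forall>x. wed one x = x \<and> wed x one = x) \<and>
     (\<forall>k a l b x y. x \<in> B k a \<longrightarrow> y \<in> B l b \<longrightarrow>
        wed x y \<in> B (k + l) (a \<noteq> b) \<and>
        wed x y = msgn (int k * int l + pint a * pint b) *\<^sub>R wed y x)"

definition sf_diff :: "'w::real_vector bigrading \<Rightarrow> ('w \<Rightarrow> 'w \<Rightarrow> 'w) \<Rightarrow> ('w \<Rightarrow> 'w) \<Rightarrow> bool" where
  "sf_diff B wed dd \<longleftrightarrow>
     (\<forall>x y. dd (x + y) = dd x + dd y) \<and> (\<forall>r x. dd (r *\<^sub>R x) = r *\<^sub>R dd x) \<and>
     (\<forall>k a x. x \<in> B k a \<longrightarrow> dd x \<in> B (Suc k) a) \<and>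
     (\<forall>x. dd (dd x) = 0) \<and>
     (\<forall>k a x y. x \<in> B k a \<longrightarrow>
        dd (wed x y) = wed (dd x) y + msgn (int k) *\<^sub>R wed x (dd y))"

definition sf_generated :: "'w::real_vector bigrading \<Rightarrow> ('w \<Rightarrow> 'w \<Rightarrow> 'w) \<Rightarrow> 'w \<Rightarrow> ('w \<Rightarrow> 'w) \<Rightarrow> bool" where
  "sf_generated B wed one dd \<longleftrightarrow>
     (\<forall>\<alpha>\<in>Om1 B. \<exists>fs gs. length fs = length gs \<and> set fs \<subseteq> Alg B \<and> set gs \<subseteq> Alg B \<and>
        \<alpha> = (\<Sum>i<length fs. wed (fs ! i) (dd (gs ! i)))) \<and>
     (\<forall>w. w \<in> span {wed f (foldr wed \<alpha>s one) | f \<alpha>s. f \<in> Alg B \<and> set \<alpha>s \<subseteq> Om1 B})"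

definition superder :: "'w::real_vector bigrading \<Rightarrow> ('w \<Rightarrow> 'w \<Rightarrow> 'w) \<Rightarrow> bool \<Rightarrow> ('w \<Rightarrow> 'w) \<Rightarrow> bool" where
  "superder B wed q D \<longleftrightarrow>
     (\<forall>f\<in>Alg B. \<forall>g\<in>Alg B. D (f + g) = D f + D g) \<and>
     (\<forall>r. \<forall>f\<in>Alg B. D (r *\<^sub>R f) = r *\<^sub>R D f) \<and>
     (\<forall>b f. f \<in> B 0 b \<longrightarrow> D f \<in> B 0 (b \<noteq> q)) \<and>
     (\<forall>a f g. f \<in> B 0 a \<longrightarrow> g \<in> Alg B \<longrightarrow>
        D (wed f g) = wed (D f) g + msgn (pint q * pint a) *\<^sub>R wed f (D g))"

definition sf_interior :: "'w::real_vector bigrading \<Rightarrow> ('w \<Rightarrow> 'w \<Rightarrow> 'w) \<Rightarrow> ('w \<Rightarrow> 'w)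
     \<Rightarrow> (('w \<Rightarrow> 'w) \<Rightarrow> 'w \<Rightarrow> 'w) \<Rightarrow> bool" where
  "sf_interior B wed dd ip \<longleftrightarrow>
     (\<forall>q D. superder B wed q D \<longrightarrow>
        (\<forall>x y. ip D (x + y) = ip D x + ip D y) \<and>
        (\<forall>r x. ip D (r *\<^sub>R x) = r *\<^sub>R ip D x) \<and>
        (\<forall>a x. x \<in> B 0 a \<longrightarrow> ip D x = 0) \<and>
        (\<forall>k a x. x \<in> B (Suc k) a \<longrightarrow> ip D x \<in> B k (a \<noteq> q)) \<and>
        (\<forall>f\<in>Alg B. ip D (dd f) = D f) \<and>
        (\<forall>k a x y. x \<in> B k a \<longrightarrow>
           ip D (wed x y) = wed (ip D x) y + msgn (int k + pint q * pint a) *\<^sub>R wed x (ip D y)))"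

definition superform_algebra :: "'w::real_vector bigrading \<Rightarrow> ('w \<Rightarrow> 'w \<Rightarrow> 'w) \<Rightarrow> 'w
     \<Rightarrow> ('w \<Rightarrow> 'w) \<Rightarrow> (('w \<Rightarrow> 'w) \<Rightarrow> 'w \<Rightarrow> 'w) \<Rightarrow> bool" where
  "superform_algebra B wed one dd ip \<longleftrightarrow>
     bigraded_space B \<and> sf_wedge B wed one \<and> sf_diff B wed dd \<and>
     sf_generated B wed one dd \<and> sf_interior B wed dd ip"

definition gerstenhaber :: "'w::real_vector bigrading \<Rightarrow> ('w \<Rightarrow> 'w \<Rightarrow> 'w) \<Rightarrow> ('w \<Rightarrow> 'w \<Rightarrow> 'w) \<Rightarrow> bool" where
  "gerstenhaber B wed gb \<longleftrightarrow>
     (\<forall>x y z. gb (x + y) z = gb x z + gb y z) \<and>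
     (\<forall>x y z. gb x (y + z) = gb x y + gb x z) \<and>
     (\<forall>r x y. gb (r *\<^sub>R x) y = r *\<^sub>R gb x y) \<and>
     (\<forall>r x y. gb x (r *\<^sub>R y) = r *\<^sub>R gb x y) \<and>
     (\<forall>k a l b x y. x \<in> B k a \<longrightarrow> y \<in> B l b \<longrightarrow>
        (if k + l = 0 then gb x y = 0 else gb x y \<in> B (k + l - 1) (a \<noteq> b)) \<and>
        gb x y = - (msgn ((int k - 1) * (int l - 1) + pint a * pint b) *\<^sub>R gb y x) \<and>
        (\<forall>m c z. z \<in> B m c \<longrightarrow>
           gb x (gb y z) = gb (gb x y) z
             + msgn ((int k - 1) * (int l - 1) + pint a * pint b) *\<^sub>R gb y (gb x z)) \<and>
        (\<forall>z. gb x (wed y z) = wed (gb x y) z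
             + msgn ((int k - 1) * int l + pint a * pint b) *\<^sub>R wed y (gb x z)))"

definition differential_bracket :: "'w::real_vector bigrading \<Rightarrow> ('w \<Rightarrow> 'w) \<Rightarrow> ('w \<Rightarrow> 'w \<Rightarrow> 'w) \<Rightarrow> bool" where
  "differential_bracket B dd gb \<longleftrightarrow>
     (\<forall>k a x y. x \<in> B k a \<longrightarrow> dd (gb x y) = gb (dd x) y + msgn (int k - 1) *\<^sub>R gb x (dd y))"

text \<open>The anchor associated with the bracket: rho(alpha) = [alpha, _] (used on A only).\<close>
definition anchor :: "('w \<Rightarrow> 'w \<Rightarrow> 'w) \<Rightarrow> 'w \<Rightarrow> ('w \<Rightarrow> 'w)" where
  "anchor gb \<alpha> = (\<lambda>f. gb \<alpha> f)"

definition lie_superalgebroid :: "'w::real_vector bigrading \<Rightarrow> ('w \<Rightarrow> 'w \<Rightarrow> 'w)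
     \<Rightarrow> ('w \<Rightarrow> 'w \<Rightarrow> 'w) \<Rightarrow> ('w \<Rightarrow> 'w \<Rightarrow> 'w) \<Rightarrow> bool" where
  "lie_superalgebroid B wed rho br \<longleftrightarrow>
     (\<forall>\<alpha>\<in>Om1 B. \<forall>\<beta>\<in>Om1 B. br \<alpha> \<beta> \<in> Om1 B) \<and>
     (\<forall>\<alpha>\<in>Om1 B. \<forall>\<alpha>'\<in>Om1 B. \<forall>\<beta>\<in>Om1 B.
        br (\<alpha> + \<alpha>') \<beta> = br \<alpha> \<beta> + br \<alpha>' \<beta> \<and> br \<beta> (\<alpha> + \<alpha>') = br \<beta> \<alpha> + br \<beta> \<alpha>') \<and>
     (\<forall>r. \<forall>\<alpha>\<in>Om1 B. \<forall>\<beta>\<in>Om1 B.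
        br (r *\<^sub>R \<alpha>) \<beta> = r *\<^sub>R br \<alpha> \<beta> \<and> br \<beta> (r *\<^sub>R \<alpha>) = r *\<^sub>R br \<beta> \<alpha>) \<and>
     (\<forall>a b \<alpha> \<beta>. \<alpha> \<in> B 1 a \<longrightarrow> \<beta> \<in> B 1 b \<longrightarrow>
        br \<alpha> \<beta> \<in> B 1 (a \<noteq> b) \<and>
        br \<alpha> \<beta> = - (msgn (pint a * pint b) *\<^sub>R br \<beta> \<alpha>) \<and>
        (\<forall>c \<gamma>. \<gamma> \<in> B 1 c \<longrightarrow>
           br \<alpha> (br \<beta> \<gamma>) = br (br \<alpha> \<beta>) \<gamma> + msgn (pint a * pint b) *\<^sub>R br \<beta> (br \<alpha> \<gamma>))) \<and>
     (\<forall>a \<alpha>. \<alpha> \<in> B 1 a \<longrightarrow> superder B wed a (rho \<alpha>)) \<and>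
     (\<forall>\<alpha>\<in>Om1 B. \<forall>\<beta>\<in>Om1 B. \<forall>f\<in>Alg B. rho (\<alpha> + \<beta>) f = rho \<alpha> f + rho \<beta> f) \<and>
     (\<forall>r. \<forall>\<alpha>\<in>Om1 B. \<forall>f\<in>Alg B. rho (r *\<^sub>R \<alpha>) f = r *\<^sub>R rho \<alpha> f) \<and>
     (\<forall>f\<in>Alg B. \<forall>\<alpha>\<in>Om1 B. \<forall>g\<in>Alg B. rho (wed f \<alpha>) g = wed f (rho \<alpha> g)) \<and>
     (\<forall>a c \<alpha> f \<beta>. \<alpha> \<in> B 1 a \<longrightarrow> f \<in> B 0 c \<longrightarrow> \<beta> \<in> Om1 B \<longrightarrow>
        br \<alpha> (wed f \<beta>) = wed (rho \<alpha> f) \<beta> + msgn (pint a * pint c) *\<^sub>R wed f (br \<alpha> \<beta>))"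

text \<open>Skew-supersymmetric anchor: alpha(rho beta) = -(-1)^(p p) beta(rho alpha),
  the pairing being alpha(D) = D \<lrcorner> alpha.\<close>
definition skew_anchor :: "'w::real_vector bigrading \<Rightarrow> (('w \<Rightarrow> 'w) \<Rightarrow> 'w \<Rightarrow> 'w)
     \<Rightarrow> ('w \<Rightarrow> 'w \<Rightarrow> 'w) \<Rightarrow> bool" where
  "skew_anchor B ip rho \<longleftrightarrow>
     (\<forall>a b \<alpha> \<beta>. \<alpha> \<in> B 1 a \<longrightarrow> \<beta> \<in> B 1 b \<longrightarrow>
        ip (rho \<beta>) \<alpha> = - (msgn (pint a * pint b) *\<^sub>R ip (rho \<alpha>) \<beta>))"

definition poisson_type :: "'w::real_vector bigrading \<Rightarrow> ('w \<Rightarrow> 'w \<Rightarrow> 'w) \<Rightarrow> ('w \<Rightarrow> 'w)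
     \<Rightarrow> (('w \<Rightarrow> 'w) \<Rightarrow> 'w \<Rightarrow> 'w) \<Rightarrow> ('w \<Rightarrow> 'w \<Rightarrow> 'w) \<Rightarrow> ('w \<Rightarrow> 'w \<Rightarrow> 'w) \<Rightarrow> bool" where
  "poisson_type B wed dd ip rho br \<longleftrightarrow>
     lie_superalgebroid B wed rho br \<and> skew_anchor B ip rho \<and>
     (\<forall>a b c f g h. f \<in> B 0 a \<longrightarrow> g \<in> B 0 b \<longrightarrow> h \<in> B 0 c \<longrightarrow>
        rho (dd f) (rho (dd g) h) = rho (dd (rho (dd f) g)) h
          + msgn (pint a * pint b) *\<^sub>R rho (dd g) (rho (dd f) h))"

end

theory Submission
  imports Defs
begin


lemma msgn_add: "msgn (x + y) = msgn x * msgn y"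
  unfolding msgn_def by auto
lemma msgn_0[simp]: "msgn 0 = 1" and msgn_1[simp]: "msgn 1 = -1"
  unfolding msgn_def by auto
lemma pint_simps[simp]: "pint True = 1" "pint False = 0" unfolding pint_def by auto

locale SFA =
  fixes B :: "nat \<Rightarrow> bool \<Rightarrow> 'w::real_vector set"
    and wed gb :: "'w \<Rightarrow> 'w \<Rightarrow> 'w" and one :: 'w and dd :: "'w \<Rightarrow> 'w"
    and ip :: "('w \<Rightarrow> 'w) \<Rightarrow> 'w \<Rightarrow> 'w"
  assumes SA: "superform_algebra B wed one dd ip"
    and GB: "gerstenhaber B wed gb"
    and DB: "differential_bracket B dd gb"
begin

lemma sub: "subspace (B k b)" using SA by (auto simp: superform_algebra_def bigraded_space_def)
lemma Bz[simp,intro]: "0 \<in> B k b" using sub subspace_0 by blast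
lemma Badd[intro]: "x \<in> B k b \<Longrightarrow> y \<in> B k b \<Longrightarrow> x + y \<in> B k b" using sub subspace_add by blast
lemma Bscale[intro]: "x \<in> B k b \<Longrightarrow> r *\<^sub>R x \<in> B k b" using sub subspace_scale by blast
lemma Bneg[intro]: "x \<in> B k b \<Longrightarrow> - x \<in> B k b" using sub subspace_neg by blast
lemma Bdiff[intro]: "x \<in> B k b \<Longrightarrow> y \<in> B k b \<Longrightarrow> x - y \<in> B k b" using sub subspace_diff by blast

lemma Buniq:
  assumes x1: "x \<in> B k b" and x2: "x \<in> B l c" and ne: "(k,b) \<noteq> (l,c)"
  shows "x = 0"
proof (rule ccontr)
  assume nz: "x \<noteq> 0"
  have EX: "\<exists>!c :: nat \<times> bool \<Rightarrow> 'w. finite {p. c p \<noteq> 0} \<and> (\<forall>k b. c (k, b) \<in> B k b) \<and>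
        x = (\<Sum>p\<in>{p. c p \<noteq> 0}. c p)"
    using SA by (auto simp: superform_algebra_def bigraded_space_def)
  define c1 where "c1 = (\<lambda>p. if p = (k,b) then x else 0)"
  define c2 where "c2 = (\<lambda>p. if p = (l,c) then x else 0)"
  have s1: "{p. c1 p \<noteq> 0} = {(k,b)}" using nz by (auto simp: c1_def)
  have s2: "{p. c2 p \<noteq> 0} = {(l,c)}" using nz by (auto simp: c2_def)
  have P1: "finite {p. c1 p \<noteq> 0} \<and> (\<forall>k b. c1 (k, b) \<in> B k b) \<and> x = (\<Sum>p\<in>{p. c1 p \<noteq> 0}. c1 p)"
    using x1 by (auto simp: s1 c1_def)
  have P2: "finite {p. c2 p \<noteq> 0} \<and> (\<forall>k b. c2 (k, b) \<in> B k b) \<and> x = (\<Sum>p\<in>{p. c2 p \<noteq> 0}. c2 p)"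
    using x2 by (auto simp: s2 c2_def)
  from EX P1 P2 have "c1 = c2" by blast
  then have "c1 (k,b) = c2 (k,b)" by simp
  then show False using ne nz by (auto simp: c1_def c2_def)
qed

lemma W: "sf_wedge B wed one" using SA by (simp add: superform_algebra_def)
lemma wed_addL[simp]: "wed (x + y) z = wed x z + wed y z" using W by (simp add: sf_wedge_def)
lemma wed_addR[simp]: "wed x (y + z) = wed x y + wed x z" using W by (simp add: sf_wedge_def)
lemma wed_scaleL[simp]: "wed (r *\<^sub>R x) y = r *\<^sub>R wed x y" using W by (simp add: sf_wedge_def)
lemma wed_scaleR[simp]: "wed x (r *\<^sub>R y) = r *\<^sub>R wed x y" using W by (simp add: sf_wedge_def)
lemma wed_assoc: "wed (wed x y) z = wed x (wed y z)" using W by (simp add: sf_wedge_def)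
lemma wed_B: "x \<in> B k a \<Longrightarrow> y \<in> B l b \<Longrightarrow> wed x y \<in> B (k + l) (a \<noteq> b)"
  using W unfolding sf_wedge_def by blast
lemma wed_comm: "x \<in> B k a \<Longrightarrow> y \<in> B l b \<Longrightarrow> wed x y = msgn (int k * int l + pint a * pint b) *\<^sub>R wed y x"
  using W unfolding sf_wedge_def by blast
lemma wed_0L[simp]: "wed 0 y = 0"
proof - have "wed (0 *\<^sub>R 0) y = 0 *\<^sub>R wed 0 y" by (rule wed_scaleL) then show ?thesis by simp qed
lemma wed_0R[simp]: "wed y 0 = 0"
proof - have "wed y (0 *\<^sub>R 0) = 0 *\<^sub>R wed y 0" by (rule wed_scaleR) then show ?thesis by simp qed
lemma wed_negL[simp]: "wed (- x) y = - wed x y"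
proof - have "wed ((-1) *\<^sub>R x) y = (-1) *\<^sub>R wed x y" by (rule wed_scaleL) then show ?thesis by simp qed
lemma wed_negR[simp]: "wed y (- x) = - wed y x"
proof - have "wed y ((-1) *\<^sub>R x) = (-1) *\<^sub>R wed y x" by (rule wed_scaleR) then show ?thesis by simp qed
lemma wed_diffL[simp]: "wed (x - z) y = wed x y - wed z y"
  using wed_addL[of x "-z" y] by simp
lemma wed_diffR[simp]: "wed y (x - z) = wed y x - wed y z"
  using wed_addR[of y x "-z"] by simp

lemma D: "sf_diff B wed dd" using SA by (simp add: superform_algebra_def)
lemma dd_add[simp]: "dd (x + y) = dd x + dd y" using D by (simp add: sf_diff_def)
lemma dd_scale[simp]: "dd (r *\<^sub>R x) = r *\<^sub>R dd x" using D by (simp add: sf_diff_def)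
lemma dd_B: "x \<in> B k a \<Longrightarrow> dd x \<in> B (Suc k) a" using D by (simp add: sf_diff_def)
lemma dd_dd[simp]: "dd (dd x) = 0" using D by (simp add: sf_diff_def)
lemma dd_wed: "x \<in> B k a \<Longrightarrow> dd (wed x y) = wed (dd x) y + msgn (int k) *\<^sub>R wed x (dd y)"
  using D by (simp add: sf_diff_def)
lemma dd_0[simp]: "dd 0 = 0"
proof - have "dd (0 *\<^sub>R 0) = 0 *\<^sub>R dd 0" by (rule dd_scale) then show ?thesis by simp qed
lemma dd_neg[simp]: "dd (- x) = - dd x"
proof - have "dd ((-1) *\<^sub>R x) = (-1) *\<^sub>R dd x" by (rule dd_scale) then show ?thesis by simp qed
lemma dd_diff[simp]: "dd (x - y) = dd x - dd y" using dd_add[of x "-y"] by simp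

lemma gb_addL[simp]: "gb (x + y) z = gb x z + gb y z" using GB by (simp add: gerstenhaber_def)
lemma gb_addR[simp]: "gb x (y + z) = gb x y + gb x z" using GB by (simp add: gerstenhaber_def)
lemma gb_scaleL[simp]: "gb (r *\<^sub>R x) y = r *\<^sub>R gb x y" using GB by (simp add: gerstenhaber_def)
lemma gb_scaleR[simp]: "gb x (r *\<^sub>R y) = r *\<^sub>R gb x y" using GB by (simp add: gerstenhaber_def)
lemma gb_0L[simp]: "gb 0 y = 0"
proof - have "gb (0 *\<^sub>R 0) y = 0 *\<^sub>R gb 0 y" by (rule gb_scaleL) then show ?thesis by simp qed
lemma gb_0R[simp]: "gb y 0 = 0"
proof - have "gb y (0 *\<^sub>R 0) = 0 *\<^sub>R gb y 0" by (rule gb_scaleR) then show ?thesis by simp qed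
lemma gb_negL[simp]: "gb (- x) y = - gb x y"
proof - have "gb ((-1) *\<^sub>R x) y = (-1) *\<^sub>R gb x y" by (rule gb_scaleL) then show ?thesis by simp qed
lemma gb_negR[simp]: "gb y (- x) = - gb y x"
proof - have "gb y ((-1) *\<^sub>R x) = (-1) *\<^sub>R gb y x" by (rule gb_scaleR) then show ?thesis by simp qed
lemma gb_diffL[simp]: "gb (x - z) y = gb x y - gb z y" using gb_addL[of x "-z" y] by simp
lemma gb_diffR[simp]: "gb y (x - z) = gb y x - gb y z" using gb_addR[of y x "-z"] by simp

lemma gb_props: "x \<in> B k a \<Longrightarrow> y \<in> B l b \<Longrightarrow>
        (if k + l = 0 then gb x y = 0 else gb x y \<in> B (k + l - 1) (a \<noteq> b)) \<and>
        gb x y = - (msgn ((int k - 1) * (int l - 1) + pint a * pint b) *\<^sub>R gb y x) \<and>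
        (\<forall>m c z. z \<in> B m c \<longrightarrow>
           gb x (gb y z) = gb (gb x y) z
             + msgn ((int k - 1) * (int l - 1) + pint a * pint b) *\<^sub>R gb y (gb x z)) \<and>
        (\<forall>z. gb x (wed y z) = wed (gb x y) z
             + msgn ((int k - 1) * int l + pint a * pint b) *\<^sub>R wed y (gb x z))"
  using GB unfolding gerstenhaber_def by blast

lemma gb00: "x \<in> B 0 a \<Longrightarrow> y \<in> B 0 b \<Longrightarrow> gb x y = 0" using gb_props[of x 0 a y 0 b] by simp
lemma gb_B: "x \<in> B k a \<Longrightarrow> y \<in> B l b \<Longrightarrow> k + l \<noteq> 0 \<Longrightarrow> gb x y \<in> B (k + l - 1) (a \<noteq> b)"
proof -
  assume h: "x \<in> B k a" "y \<in> B l b" "k + l \<noteq> 0"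
  then have "if k + l = 0 then gb x y = 0 else gb x y \<in> B (k + l - 1) (a \<noteq> b)"
    using gb_props[of x k a y l b] by blast
  then show ?thesis using h(3) by argo
qed
lemma gb_skew: "x \<in> B k a \<Longrightarrow> y \<in> B l b \<Longrightarrow>
   gb x y = - (msgn ((int k - 1) * (int l - 1) + pint a * pint b) *\<^sub>R gb y x)"
  using gb_props[of x k a y l b] by blast
lemma gb_jac: "x \<in> B k a \<Longrightarrow> y \<in> B l b \<Longrightarrow> z \<in> B m c \<Longrightarrow>
   gb x (gb y z) = gb (gb x y) z + msgn ((int k - 1) * (int l - 1) + pint a * pint b) *\<^sub>R gb y (gb x z)"
  using gb_props[of x k a y l b] by blast
lemma gb_leib: "x \<in> B k a \<Longrightarrow> y \<in> B l b \<Longrightarrow>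
   gb x (wed y z) = wed (gb x y) z + msgn ((int k - 1) * int l + pint a * pint b) *\<^sub>R wed y (gb x z)"
  using gb_props[of x k a y l b] by blast
lemma gb_dd: "x \<in> B k a \<Longrightarrow> dd (gb x y) = gb (dd x) y + msgn (int k - 1) *\<^sub>R gb x (dd y)"
  using DB unfolding differential_bracket_def by blast

lemma ip_props: assumes sdr: "superder B wed q Dr" shows "
        (\<forall>x y. ip Dr (x + y) = ip Dr x + ip Dr y) \<and>
        (\<forall>r x. ip Dr (r *\<^sub>R x) = r *\<^sub>R ip Dr x) \<and>
        (\<forall>a x. x \<in> B 0 a \<longrightarrow> ip Dr x = 0) \<and>
        (\<forall>k a x. x \<in> B (Suc k) a \<longrightarrow> ip Dr x \<in> B k (a \<noteq> q)) \<and>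
        (\<forall>f\<in>Alg B. ip Dr (dd f) = Dr f) \<and>
        (\<forall>k a x y. x \<in> B k a \<longrightarrow>
           ip Dr (wed x y) = wed (ip Dr x) y + msgn (int k + pint q * pint a) *\<^sub>R wed x (ip Dr y))"
proof -
  have I: "sf_interior B wed dd ip" using SA by (simp add: superform_algebra_def)
  show ?thesis by (rule I[unfolded sf_interior_def, THEN spec[of _ q], THEN spec[of _ Dr], THEN mp, OF sdr])
qed

end

context SFA begin

lemma Alg_split: "f \<in> Alg B \<Longrightarrow> \<exists>f0 f1. f0 \<in> B 0 False \<and> f1 \<in> B 0 True \<and> f = f0 + f1"
  unfolding Alg_def by blast
lemma Om1_split: "f \<in> Om1 B \<Longrightarrow> \<exists>f0 f1. f0 \<in> B 1 False \<and> f1 \<in> B 1 True \<and> f = f0 + f1"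
  unfolding Om1_def by blast
lemma B0_Alg: "f \<in> B 0 c \<Longrightarrow> f \<in> Alg B"
  unfolding Alg_def by (cases c) force+
lemma B1_Om1: "f \<in> B 1 c \<Longrightarrow> f \<in> Om1 B"
  unfolding Om1_def by (cases c) force+

lemma sum_list_B: "\<forall>x\<in>set xs. x \<in> B k b \<Longrightarrow> sum_list xs \<in> B k b"
  by (induction xs) auto

lemma gen_B1: "f \<in> B 0 c \<Longrightarrow> g \<in> B 0 e \<Longrightarrow> wed f (dd g) \<in> B 1 (c \<noteq> e)"
  using wed_B[of f 0 c "dd g" 1 e] dd_B[of g 0 e] by simp

definition isgen :: "bool \<Rightarrow> 'w \<Rightarrow> bool" where
  "isgen a t \<longleftrightarrow> (\<exists>f g c e. t = wed f (dd g) \<and> f \<in> B 0 c \<and> g \<in> B 0 e \<and> (c \<noteq> e) = a)"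

lemma isgen_B1: "isgen a t \<Longrightarrow> t \<in> B 1 a"
  unfolding isgen_def using gen_B1 by blast

lemma gen_sum:
  "(\<forall>i<(n::nat). F i \<in> Alg B \<and> G i \<in> Alg B) \<Longrightarrow>
   \<exists>ts. (\<forall>x\<in>set ts. isgen (snd x) (fst x)) \<and>
        (\<Sum>i<n. wed (F i) (dd (G i))) = sum_list (map fst ts)"
proof (induction n)
  case 0
  then show ?case by (intro exI[of _ "[]"]) simp
next
  case (Suc n)
  then obtain ts where ts: "\<forall>x\<in>set ts. isgen (snd x) (fst x)"
    "(\<Sum>i<n. wed (F i) (dd (G i))) = sum_list (map fst ts)" by auto
  obtain x0 x1 where x: "x0 \<in> B 0 False" "x1 \<in> B 0 True" "F n = x0 + x1"
    using Suc.prems Alg_split by blast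
  obtain y0 y1 where y: "y0 \<in> B 0 False" "y1 \<in> B 0 True" "G n = y0 + y1"
    using Suc.prems Alg_split by blast
  let ?us = "[(wed x0 (dd y0), False), (wed x0 (dd y1), True), (wed x1 (dd y0), True), (wed x1 (dd y1), False)]"
  have "\<forall>x\<in>set ?us. isgen (snd x) (fst x)"
    using x y unfolding isgen_def by force
  moreover have "(\<Sum>i<Suc n. wed (F i) (dd (G i))) = sum_list (map fst (ts @ ?us))"
    using ts(2) x(3) y(3) by (simp add: algebra_simps)
  ultimately show ?case using ts(1) by (intro exI[of _ "ts @ ?us"]) auto
qed

lemma sum_list_filter_split:
  "sum_list (map fst (ts :: ('w \<times> bool) list)) = sum_list (map fst (filter P ts)) + sum_list (map fst (filter (\<lambda>x. \<not> P x) ts))"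
  by (induction ts) (auto simp: add_ac)

lemma B1_list:
  assumes "\<alpha> \<in> B 1 a"
  shows "\<exists>xs. (\<forall>t\<in>set xs. isgen a t) \<and> \<alpha> = sum_list xs"
proof -
  have "\<alpha> \<in> Om1 B" using assms B1_Om1 by blast
  then obtain fs gs where fg: "length fs = length gs" "set fs \<subseteq> Alg B" "set gs \<subseteq> Alg B"
     "\<alpha> = (\<Sum>i<length fs. wed (fs ! i) (dd (gs ! i)))"
    using SA unfolding superform_algebra_def sf_generated_def by meson
  have "\<forall>i<length fs. fs ! i \<in> Alg B \<and> gs ! i \<in> Alg B"
    using fg(1-3) by (auto dest: nth_mem)
  from gen_sum[OF this] obtain ts where ts: "\<forall>x\<in>set ts. isgen (snd x) (fst x)"
     "\<alpha> = sum_list (map fst ts)" using fg(4) by auto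
  define xs where "xs = map fst (filter (\<lambda>x. snd x = a) ts)"
  define ys where "ys = map fst (filter (\<lambda>x. \<not> snd x = a) ts)"
  have sp: "\<alpha> = sum_list xs + sum_list ys" unfolding xs_def ys_def
    using ts(2) sum_list_filter_split by blast
  have gx: "\<forall>t\<in>set xs. isgen a t" using ts(1) unfolding xs_def by auto
  have "sum_list xs \<in> B 1 a" using gx isgen_B1 by (intro sum_list_B) blast
  have "sum_list ys \<in> B 1 (\<not> a)"
  proof (intro sum_list_B ballI)
    fix t assume "t \<in> set ys"
    then obtain x where x: "x \<in> set ts" "snd x \<noteq> a" "t = fst x" unfolding ys_def by auto
    then have "t \<in> B 1 (snd x)" using ts(1) isgen_B1 by blast
    then show "t \<in> B 1 (\<not> a)" using x(2) by (cases a; cases "snd x") auto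
  qed
  moreover have "sum_list ys \<in> B 1 a" using sp `sum_list xs \<in> B 1 a` assms
    Bdiff[of \<alpha> 1 a "sum_list xs"] by (simp add: algebra_simps)
  ultimately have "sum_list ys = 0" using Buniq by blast
  then show ?thesis using sp gx by auto
qed

lemma B1_induct[consumes 1, case_names zero step]:
  assumes "\<alpha> \<in> B 1 a" and "P 0"
    and "\<And>f g c e \<beta>. f \<in> B 0 c \<Longrightarrow> g \<in> B 0 e \<Longrightarrow> (c \<noteq> e) = a \<Longrightarrow> \<beta> \<in> B 1 a \<Longrightarrow> P \<beta>
          \<Longrightarrow> P (wed f (dd g) + \<beta>)"
  shows "P \<alpha>"
proof -
  obtain xs where xs: "\<forall>t\<in>set xs. isgen a t" "\<alpha> = sum_list xs" using B1_list assms(1) by blast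
  have "(\<forall>t\<in>set xs. isgen a t) \<longrightarrow> P (sum_list xs)"
  proof (induction xs)
    case Nil then show ?case using assms(2) by simp
  next
    case (Cons t xs)
    show ?case
    proof
      assume h: "\<forall>t\<in>set (t # xs). isgen a t"
      then obtain f g c e where "t = wed f (dd g)" "f \<in> B 0 c" "g \<in> B 0 e" "(c \<noteq> e) = a"
        unfolding isgen_def by auto
      moreover have "sum_list xs \<in> B 1 a" using h isgen_B1 by (intro sum_list_B) auto
      moreover have "P (sum_list xs)" using Cons h by auto
      ultimately show "P (sum_list (t # xs))" using assms(3) by auto
    qed
  qed
  then show ?thesis using xs by auto
qed

end


lemma msgn_m1[simp]: "msgn (-1) = -1" unfolding msgn_def by auto

context SFA begin

lemma rho_sd: "\<alpha> \<in> B 1 a \<Longrightarrow> superder B wed a (gb \<alpha>)"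
  unfolding superder_def
proof (intro conjI allI ballI impI)
  fix b f assume "\<alpha> \<in> B 1 a" "f \<in> B 0 b"
  then show "gb \<alpha> f \<in> B 0 (b \<noteq> a)" using gb_B[of \<alpha> 1 a f 0 b] by (cases a; cases b) auto
next
  fix a' f g assume "\<alpha> \<in> B 1 a" "f \<in> B 0 a'" "g \<in> Alg B"
  then show "gb \<alpha> (wed f g) = wed (gb \<alpha> f) g + msgn (pint a * pint a') *\<^sub>R wed f (gb \<alpha> g)"
    using gb_leib[of \<alpha> 1 a f 0 a' g] by simp
qed auto

context fixes q Dr assumes sd: "superder B wed q Dr" begin
lemma ip_add[simp]: "ip Dr (x + y) = ip Dr x + ip Dr y" using conjunct1[OF ip_props[OF sd]] by blast
lemma ip_scale[simp]: "ip Dr (r *\<^sub>R x) = r *\<^sub>R ip Dr x" using conjunct1[OF conjunct2[OF ip_props[OF sd]]] by blast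
lemma ip_B0: "x \<in> B 0 a \<Longrightarrow> ip Dr x = 0" using conjunct1[OF conjunct2[OF conjunct2[OF ip_props[OF sd]]]] by blast
lemma ip_ddA: "f \<in> Alg B \<Longrightarrow> ip Dr (dd f) = Dr f" using conjunct1[OF conjunct2[OF conjunct2[OF conjunct2[OF conjunct2[OF ip_props[OF sd]]]]]] by blast
lemma ip_wed: "x \<in> B k a \<Longrightarrow> ip Dr (wed x y) = wed (ip Dr x) y + msgn (int k + pint q * pint a) *\<^sub>R wed x (ip Dr y)"
  using conjunct2[OF conjunct2[OF conjunct2[OF conjunct2[OF conjunct2[OF ip_props[OF sd]]]]]] by blast
lemma ip_0[simp]: "ip Dr 0 = 0"
proof - have "ip Dr (0 *\<^sub>R 0) = 0 *\<^sub>R ip Dr 0" by (rule ip_scale) then show ?thesis by simp qed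

lemma ip_gen: "f \<in> B 0 c \<Longrightarrow> g \<in> Alg B \<Longrightarrow> ip Dr (wed f (dd g)) = msgn (pint q * pint c) *\<^sub>R wed f (Dr g)"
  using ip_wed[of f 0 c "dd g"] ip_B0[of f c] ip_ddA[of g] by simp

lemma ip_dgen: "f \<in> B 0 c \<Longrightarrow> g \<in> Alg B \<Longrightarrow>
   ip Dr (dd (wed f (dd g))) = wed (Dr f) (dd g) + msgn (1 + pint q * pint c) *\<^sub>R wed (dd f) (Dr g)"
  using dd_wed[of f 0 c "dd g"] ip_wed[of "dd f" 1 c "dd g"] dd_B[of f 0 c] ip_ddA[of g] ip_ddA[of f] B0_Alg[of f c]
  by simp
end

lemma ip_lin:
  assumes s1: "superder B wed q D1" and s2: "superder B wed q D2" and s3: "superder B wed q D3"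
    and h: "\<forall>x\<in>Alg B. D3 x = D1 x + D2 x" and a: "\<alpha> \<in> B 1 a"
  shows "ip D3 \<alpha> = ip D1 \<alpha> + ip D2 \<alpha> \<and> ip D3 (dd \<alpha>) = ip D1 (dd \<alpha>) + ip D2 (dd \<alpha>)"
  using a
proof (induction rule: B1_induct)
  case zero then show ?case using s1 s2 s3 by simp
next
  case (step f g c e \<beta>)
  have g: "g \<in> Alg B" using step B0_Alg by blast
  show ?case using step.IH s1 s2 s3 ip_gen[OF s1 step(1) g] ip_gen[OF s2 step(1) g] ip_gen[OF s3 step(1) g]
    ip_dgen[OF s1 step(1) g] ip_dgen[OF s2 step(1) g] ip_dgen[OF s3 step(1) g]
    h g B0_Alg[OF step(1)] by (simp add: algebra_simps)
qed

lemma ip_zero: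
  assumes s1: "superder B wed q D1" and h: "\<forall>x\<in>Alg B. D1 x = 0" and a: "\<alpha> \<in> B 1 a"
  shows "ip D1 \<alpha> = 0 \<and> ip D1 (dd \<alpha>) = 0"
  using a
proof (induction rule: B1_induct)
  case zero then show ?case using s1 by simp
next
  case (step f g c e \<beta>)
  have g: "g \<in> Alg B" using step B0_Alg by blast
  show ?case using step.IH s1 ip_gen[OF s1 step(1) g] ip_dgen[OF s1 step(1) g]
    h g B0_Alg[OF step(1)] by simp
qed

lemma L2: "f \<in> B 0 c \<Longrightarrow> g \<in> B 0 e \<Longrightarrow> gb (dd f) g = gb f (dd g)"
  using gb_dd[of f 0 c g] gb00[of f c g e] by simp

lemma L2': "f \<in> B 0 c \<Longrightarrow> g \<in> B 0 e \<Longrightarrow> gb (dd f) g = - (msgn (pint c * pint e) *\<^sub>R gb (dd g) f)"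
  using L2[of f c g e] gb_skew[of f 0 c "dd g" 1 e] dd_B[of g 0 e] by simp

lemma C2h: "f \<in> B 0 c \<Longrightarrow> gb (dd f) (dd g) = dd (gb (dd f) g)"
  using gb_dd[of "dd f" 1 c g] dd_B[of f 0 c] by simp

lemma L3: assumes f: "f \<in> B 0 c" and al: "\<alpha> \<in> B 1 a" and g: "g \<in> B 0 e"
  shows "gb (wed f \<alpha>) g = wed f (gb \<alpha> g)"
proof -
  have w: "wed f \<alpha> \<in> B 1 (c \<noteq> a)" using wed_B[OF f al] by simp
  have 1: "gb (wed f \<alpha>) g = - (msgn (pint (c \<noteq> a) * pint e) *\<^sub>R gb g (wed f \<alpha>))"
    using gb_skew[OF w g] by simp
  have 2: "gb g (wed f \<alpha>) = msgn (pint e * pint c) *\<^sub>R wed f (gb g \<alpha>)"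
    using gb_leib[OF g f, of \<alpha>] gb00[OF g f] by simp
  have 3: "gb g \<alpha> = - (msgn (pint e * pint a) *\<^sub>R gb \<alpha> g)"
    using gb_skew[OF g al] by simp
  show ?thesis unfolding 1 2 3 by (cases a; cases c; cases e) simp_all
qed

end

context SFA begin

lemma skew_gen1:
  assumes h: "h \<in> B 0 u" and k: "k \<in> B 0 v" and al: "\<alpha> \<in> B 1 a"
  shows "ip (gb (wed h (dd k))) \<alpha> = - (msgn (pint a * pint (u \<noteq> v)) *\<^sub>R msgn (pint a * pint u) *\<^sub>R wed h (gb \<alpha> k))"
  using al
proof (induction rule: B1_induct)
  case zero
  have "superder B wed (u \<noteq> v) (gb (wed h (dd k)))" using rho_sd gen_B1[OF h k] by blast
  then show ?case by simp
next
  case (step f g c e \<beta>)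
  have sb: "superder B wed (u \<noteq> v) (gb (wed h (dd k)))" using rho_sd gen_B1[OF h k] by blast
  have dg: "dd g \<in> B 1 e" using dd_B[OF step(2)] by simp
  have dk: "dd k \<in> B 1 v" using dd_B[OF k] by simp
  have e1: "ip (gb (wed h (dd k))) (wed f (dd g)) = msgn (pint (u \<noteq> v) * pint c) *\<^sub>R wed f (gb (wed h (dd k)) g)"
    using ip_gen[OF sb step(1) B0_Alg[OF step(2)]] .
  have e2: "gb (wed h (dd k)) g = wed h (- (msgn (pint v * pint e) *\<^sub>R gb (dd g) k))"
    using L3[OF h dk step(2)] L2'[OF k step(2)] by simp
  have e3: "gb (wed f (dd g)) k = wed f (gb (dd g) k)" using L3[OF step(1) dg k] .
  have e4: "wed f (wed h (gb (dd g) k)) = msgn (pint c * pint u) *\<^sub>R wed h (wed f (gb (dd g) k))"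
    using wed_comm[OF step(1) h] by (simp add: wed_assoc[symmetric])
  have "ip (gb (wed h (dd k))) (wed f (dd g)) = - (msgn (pint a * pint (u \<noteq> v)) *\<^sub>R msgn (pint a * pint u) *\<^sub>R wed h (gb (wed f (dd g)) k))"
    unfolding e1 e2 e3 using e4 step(3)
    by (cases c; cases e; cases u; cases v) (simp_all add: algebra_simps)
  then show ?case using step.IH sb by (simp add: algebra_simps)
qed

lemma skew_gen:
  assumes h: "h \<in> B 0 u" and k: "k \<in> B 0 v" and al: "\<alpha> \<in> B 1 a"
  shows "ip (gb (wed h (dd k))) \<alpha> = - (msgn (pint a * pint (u \<noteq> v)) *\<^sub>R ip (gb \<alpha>) (wed h (dd k)))"
  using skew_gen1[OF h k al] ip_gen[OF rho_sd[OF al] h B0_Alg[OF k]] by simp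

lemma skew:
  assumes al: "\<alpha> \<in> B 1 a" and be: "\<beta> \<in> B 1 b"
  shows "ip (gb \<beta>) \<alpha> = - (msgn (pint a * pint b) *\<^sub>R ip (gb \<alpha>) \<beta>)"
  using be
proof (induction rule: B1_induct)
  case zero
  have z: "gb 0 = (\<lambda>x. 0)" by (rule ext) simp
  have sd0: "superder B wed b (\<lambda>x. 0)" using rho_sd[of 0 b] z by simp
  have "ip (\<lambda>x. 0) \<alpha> = 0 \<and> ip (\<lambda>x. 0) (dd \<alpha>) = 0" using ip_zero[OF sd0 _ al] by simp
  then show ?case using z rho_sd[OF al] by simp
next
  case (step f g c e \<beta>)
  have t: "wed f (dd g) \<in> B 1 b" using gen_B1[OF step(1) step(2)] step(3) by simp
  have tb: "wed f (dd g) + \<beta> \<in> B 1 b" using t step(4) by blast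
  have L: "ip (gb (wed f (dd g) + \<beta>)) \<alpha> = ip (gb (wed f (dd g))) \<alpha> + ip (gb \<beta>) \<alpha>"
    using ip_lin[OF rho_sd[OF t] rho_sd[OF step(4)] rho_sd[OF tb] _ al] by simp
  show ?case unfolding L using step.IH skew_gen[OF step(1) step(2) al] step(3) rho_sd[OF al]
    by (simp add: algebra_simps)
qed

end

lemma msgn_2[simp]: "msgn 2 = 1" and msgn_3[simp]: "msgn 3 = -1" unfolding msgn_def by auto
context SFA begin

lemma C3gen:
  assumes f: "f \<in> B 0 c" and g: "g \<in> B 0 e" and h: "h \<in> B 0 u" and k: "k \<in> B 0 v"
  defines "al \<equiv> wed f (dd g)" and "be \<equiv> wed h (dd k)"
  shows "gb al be = wed (gb al h) (dd k) + msgn (1 + pint (c \<noteq> e) * pint u) *\<^sub>R wed (dd h) (gb al k)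
      - msgn (pint (c \<noteq> e) * pint (u \<noteq> v)) *\<^sub>R ip (gb be) (dd al)
      + dd (msgn (pint (c \<noteq> e) * pint u) *\<^sub>R wed h (gb al k))"
proof -
  have dg: "dd g \<in> B 1 e" using dd_B[OF g] by simp
  have dk: "dd k \<in> B 1 v" using dd_B[OF k] by simp
  have df: "dd f \<in> B 1 c" using dd_B[OF f] by simp
  have alB: "al \<in> B 1 (c \<noteq> e)" unfolding al_def using gen_B1[OF f g] .
  have beB: "be \<in> B 1 (u \<noteq> v)" unfolding be_def using gen_B1[OF h k] .
  define P where "P = gb (dd g) h"
  define Q where "Q = gb (dd g) k"
  define R where "R = gb (dd k) f"
  have a1: "gb al h = wed f P" unfolding al_def P_def using L3[OF f dg h] .
  have a2: "gb al k = wed f Q" unfolding al_def Q_def using L3[OF f dg k] .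
  have a3: "gb be f = wed h R" unfolding be_def R_def using L3[OF h dk f] .
  have a4: "gb be g = - (msgn (pint v * pint e) *\<^sub>R wed h Q)"
    unfolding be_def Q_def using L3[OF h dk g] L2'[OF k g] by simp
  have a5: "dd al = wed (dd f) (dd g)" unfolding al_def using dd_wed[OF f, of "dd g"] by simp
  have a6: "ip (gb be) (dd al) = wed (gb be f) (dd g) + msgn (1 + pint (u \<noteq> v) * pint c) *\<^sub>R wed (dd f) (gb be g)"
    using ip_dgen[OF rho_sd[OF beB] f B0_Alg[OF g]] unfolding al_def .
  have a7: "gb al be = wed (gb al h) (dd k) + msgn (pint (c \<noteq> e) * pint u) *\<^sub>R wed h (gb al (dd k))"
    unfolding be_def using gb_leib[OF alB h, of "dd k"] by simp
  have a8: "gb al (dd k) = - (msgn (pint (c \<noteq> e) * pint v) *\<^sub>R gb (dd k) al)"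
    using gb_skew[OF alB dk] by simp
  have a9: "gb (dd k) al = wed R (dd g) + msgn (pint v * pint c) *\<^sub>R wed f (gb (dd k) (dd g))"
    unfolding al_def R_def using gb_leib[OF dk f, of "dd g"] by simp
  have a10: "gb (dd k) (dd g) = - (msgn (pint v * pint e) *\<^sub>R dd Q)"
    unfolding Q_def using gb_skew[OF dk dg] C2h[OF g, of k] by simp
  have a12: "dd (wed h (wed f Q)) = wed (dd h) (wed f Q) + wed h (wed (dd f) Q + wed f (dd Q))"
    using dd_wed[OF h, of "wed f Q"] dd_wed[OF f, of Q] by simp
  have a13: "wed (dd f) (wed h Q) = msgn (pint c * pint u) *\<^sub>R wed h (wed (dd f) Q)"
    using wed_comm[OF df h] by (simp add: wed_assoc[symmetric])
  show ?thesis
    unfolding a7 a8 a9 a10 a6 a1 a2 a3 a4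
    using a12 a13
    by (cases c; cases e; cases u; cases v) (simp_all add: algebra_simps wed_assoc)
qed

end

context SFA begin

lemma C3_1:
  assumes h: "h \<in> B 0 u" and k: "k \<in> B 0 v" and al: "\<alpha> \<in> B 1 a"
  shows "gb \<alpha> (wed h (dd k)) = wed (gb \<alpha> h) (dd k) + msgn (1 + pint a * pint u) *\<^sub>R wed (dd h) (gb \<alpha> k)
      - msgn (pint a * pint (u \<noteq> v)) *\<^sub>R ip (gb (wed h (dd k))) (dd \<alpha>)
      + dd (msgn (pint a * pint u) *\<^sub>R wed h (gb \<alpha> k))"
  using al
proof (induction rule: B1_induct)
  case zero
  have "superder B wed (u \<noteq> v) (gb (wed h (dd k)))" using rho_sd gen_B1[OF h k] by blast
  then show ?case by simp
next
  case (step f g c e \<beta>)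
  have sb: "superder B wed (u \<noteq> v) (gb (wed h (dd k)))" using rho_sd gen_B1[OF h k] by blast
  have "(c \<noteq> e) = a" by fact
  then have G: "gb (wed f (dd g)) (wed h (dd k)) = wed (gb (wed f (dd g)) h) (dd k) + msgn (1 + pint a * pint u) *\<^sub>R wed (dd h) (gb (wed f (dd g)) k)
      - msgn (pint a * pint (u \<noteq> v)) *\<^sub>R ip (gb (wed h (dd k))) (dd (wed f (dd g)))
      + dd (msgn (pint a * pint u) *\<^sub>R wed h (gb (wed f (dd g)) k))"
    using C3gen[OF step(1) step(2) h k] by blast
  have "gb (wed f (dd g) + \<beta>) (wed h (dd k)) = (wed (gb (wed f (dd g)) h) (dd k) + msgn (1 + pint a * pint u) *\<^sub>R wed (dd h) (gb (wed f (dd g)) k)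
      - msgn (pint a * pint (u \<noteq> v)) *\<^sub>R ip (gb (wed h (dd k))) (dd (wed f (dd g)))
      + dd (msgn (pint a * pint u) *\<^sub>R wed h (gb (wed f (dd g)) k))) + (wed (gb \<beta> h) (dd k) + msgn (1 + pint a * pint u) *\<^sub>R wed (dd h) (gb \<beta> k)
      - msgn (pint a * pint (u \<noteq> v)) *\<^sub>R ip (gb (wed h (dd k))) (dd \<beta>)
      + dd (msgn (pint a * pint u) *\<^sub>R wed h (gb \<beta> k)))"
    by (simp only: gb_addL G step.IH)
  then show ?case using sb by (simp add: algebra_simps)
qed

lemma C3:
  assumes al: "\<alpha> \<in> B 1 a" and be: "\<beta> \<in> B 1 b"
  shows "gb \<alpha> \<beta> = ip (gb \<alpha>) (dd \<beta>) - msgn (pint a * pint b) *\<^sub>R ip (gb \<beta>) (dd \<alpha>) + dd (ip (gb \<alpha>) \<beta>)"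
  using be
proof (induction rule: B1_induct)
  case zero
  have z: "gb 0 = (\<lambda>x. 0)" by (rule ext) simp
  have sd0: "superder B wed b (\<lambda>x. 0)" using rho_sd[of 0 b] z by simp
  have "ip (\<lambda>x. 0) \<alpha> = 0 \<and> ip (\<lambda>x. 0) (dd \<alpha>) = 0" using ip_zero[OF sd0 _ al] by simp
  then show ?case using z rho_sd[OF al] by simp
next
  case (step h k u v \<beta>)
  have t: "wed h (dd k) \<in> B 1 b" using gen_B1[OF step(1) step(2)] step(3) by simp
  have tb: "wed h (dd k) + \<beta> \<in> B 1 b" using t step(4) by blast
  have L: "ip (gb (wed h (dd k) + \<beta>)) (dd \<alpha>) = ip (gb (wed h (dd k))) (dd \<alpha>) + ip (gb \<beta>) (dd \<alpha>)"
    using ip_lin[OF rho_sd[OF t] rho_sd[OF step(4)] rho_sd[OF tb] _ al] by simp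
  have sa: "superder B wed a (gb \<alpha>)" using rho_sd[OF al] .
  have "(u \<noteq> v) = b" by fact
  then have G: "gb \<alpha> (wed h (dd k)) = ip (gb \<alpha>) (dd (wed h (dd k))) - msgn (pint a * pint b) *\<^sub>R ip (gb (wed h (dd k))) (dd \<alpha>) + dd (ip (gb \<alpha>) (wed h (dd k)))"
    using C3_1[OF step(1) step(2) al] ip_dgen[OF sa step(1) B0_Alg[OF step(2)]] ip_gen[OF sa step(1) B0_Alg[OF step(2)]]
    by simp
  have "gb \<alpha> (wed h (dd k) + \<beta>) = (ip (gb \<alpha>) (dd (wed h (dd k))) - msgn (pint a * pint b) *\<^sub>R ip (gb (wed h (dd k))) (dd \<alpha>) + dd (ip (gb \<alpha>) (wed h (dd k))))
     + (ip (gb \<alpha>) (dd \<beta>) - msgn (pint a * pint b) *\<^sub>R ip (gb \<beta>) (dd \<alpha>) + dd (ip (gb \<alpha>) \<beta>))"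
    by (simp only: gb_addR G step.IH)
  then show ?case unfolding L using sa by (simp add: algebra_simps)
qed

lemma L3g: assumes "f \<in> B 0 c" "\<alpha> \<in> B 1 a" "g \<in> Alg B" shows "gb (wed f \<alpha>) g = wed f (gb \<alpha> g)"
proof -
  obtain g0 g1 where "g0 \<in> B 0 False" "g1 \<in> B 0 True" "g = g0 + g1" using Alg_split assms(3) by blast
  then show ?thesis using L3[OF assms(1,2), of g0] L3[OF assms(1,2), of g1] by simp
qed
lemma L3a: assumes "f \<in> B 0 c" "\<alpha> \<in> Om1 B" "g \<in> Alg B" shows "gb (wed f \<alpha>) g = wed f (gb \<alpha> g)"
proof -
  obtain g0 g1 where "g0 \<in> B 1 False" "g1 \<in> B 1 True" "\<alpha> = g0 + g1" using Om1_split assms(2) by blast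
  then show ?thesis using L3g[OF assms(1) _ assms(3), of g0] L3g[OF assms(1) _ assms(3), of g1] by simp
qed
lemma L3A: assumes "f \<in> Alg B" "\<alpha> \<in> Om1 B" "g \<in> Alg B" shows "gb (wed f \<alpha>) g = wed f (gb \<alpha> g)"
proof -
  obtain g0 g1 where "g0 \<in> B 0 False" "g1 \<in> B 0 True" "f = g0 + g1" using Alg_split assms(1) by blast
  then show ?thesis using L3a[OF _ assms(2,3), of g0] L3a[OF _ assms(2,3), of g1] by simp
qed

lemma C2: assumes "f \<in> Alg B" shows "gb (dd f) (dd g) = dd (gb (dd f) g)"
proof -
  obtain g0 g1 where "g0 \<in> B 0 False" "g1 \<in> B 0 True" "f = g0 + g1" using Alg_split assms(1) by blast
  then show ?thesis using C2h[of g0 False g] C2h[of g1 True g] by simp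
qed

lemma Om1_closed: assumes "\<alpha> \<in> Om1 B" "\<beta> \<in> Om1 B" shows "gb \<alpha> \<beta> \<in> Om1 B"
proof -
  obtain a0 a1 where a: "a0 \<in> B 1 False" "a1 \<in> B 1 True" "\<alpha> = a0 + a1" using Om1_split assms(1) by blast
  obtain b0 b1 where b: "b0 \<in> B 1 False" "b1 \<in> B 1 True" "\<beta> = b0 + b1" using Om1_split assms(2) by blast
  have 1: "gb a0 b0 + gb a1 b1 \<in> B 1 False"
    using gb_B[OF a(1) b(1)] gb_B[OF a(2) b(2)] by (intro Badd) simp_all
  have 2: "gb a0 b1 + gb a1 b0 \<in> B 1 True"
    using gb_B[OF a(1) b(2)] gb_B[OF a(2) b(1)] by (intro Badd) simp_all
  have "gb \<alpha> \<beta> = (gb a0 b0 + gb a1 b1) + (gb a0 b1 + gb a1 b0)" using a b by (simp add: algebra_simps)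
  then show ?thesis using 1 2 unfolding Om1_def by blast
qed

lemma lie: "lie_superalgebroid B wed (anchor gb) gb"
  unfolding lie_superalgebroid_def anchor_def
proof (intro conjI ballI allI impI)
  fix \<alpha> \<beta> assume "\<alpha> \<in> Om1 B" "\<beta> \<in> Om1 B" then show "gb \<alpha> \<beta> \<in> Om1 B" by (rule Om1_closed)
next
  fix a b \<alpha> \<beta> assume h: "\<alpha> \<in> B 1 a" "\<beta> \<in> B 1 b"
  show "gb \<alpha> \<beta> \<in> B 1 (a \<noteq> b)" using gb_B[OF h] by simp
  show "gb \<alpha> \<beta> = - (msgn (pint a * pint b) *\<^sub>R gb \<beta> \<alpha>)" using gb_skew[OF h] by simp
  fix c \<gamma> assume "\<gamma> \<in> B 1 c"
  then show "gb \<alpha> (gb \<beta> \<gamma>) = gb (gb \<alpha> \<beta>) \<gamma> + msgn (pint a * pint b) *\<^sub>R gb \<beta> (gb \<alpha> \<gamma>)"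
    using gb_jac[OF h] by simp
next
  fix a \<alpha> assume "\<alpha> \<in> B 1 a" then show "superder B wed a (gb \<alpha>)" by (rule rho_sd)
next
  fix f \<alpha> g assume "f \<in> Alg B" "\<alpha> \<in> Om1 B" "g \<in> Alg B"
  then show "gb (wed f \<alpha>) g = wed f (gb \<alpha> g)" by (rule L3A)
next
  fix a c \<alpha> f \<beta> assume "\<alpha> \<in> B 1 a" "f \<in> B 0 c" "\<beta> \<in> Om1 B"
  then show "gb \<alpha> (wed f \<beta>) = wed (gb \<alpha> f) \<beta> + msgn (pint a * pint c) *\<^sub>R wed f (gb \<alpha> \<beta>)"
    using gb_leib[of \<alpha> 1 a f 0 c \<beta>] by simp
qed auto

lemma skewA: "skew_anchor B ip (anchor gb)"
  unfolding skew_anchor_def anchor_def using skew by blast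

lemma poisson: "poisson_type B wed dd ip (anchor gb) gb"
  unfolding poisson_type_def
proof (intro conjI lie skewA allI impI)
  fix a b c f g h assume h: "f \<in> B 0 a" "g \<in> B 0 b" "h \<in> B 0 c"
  have df: "dd f \<in> B 1 a" using dd_B[OF h(1)] by simp
  have dg: "dd g \<in> B 1 b" using dd_B[OF h(2)] by simp
  show "anchor gb (dd f) (anchor gb (dd g) h) = anchor gb (dd (anchor gb (dd f) g)) h
          + msgn (pint a * pint b) *\<^sub>R anchor gb (dd g) (anchor gb (dd f) h)"
    unfolding anchor_def using gb_jac[OF df dg h(3)] C2h[OF h(1), of g] by simp
qed

end

theorem mainTheorem7:
  fixes B :: "nat \<Rightarrow> bool \<Rightarrow> 'w::real_vector set"
    and wed gb :: "'w \<Rightarrow> 'w \<Rightarrow> 'w" and one :: 'w and dd :: "'w \<Rightarrow> 'w"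
    and ip :: "('w \<Rightarrow> 'w) \<Rightarrow> 'w \<Rightarrow> 'w"
  assumes "superform_algebra B wed one dd ip"
    and "gerstenhaber B wed gb"
    and "differential_bracket B dd gb"
  shows "skew_anchor B ip (anchor gb)
    \<and> (\<forall>f\<in>Alg B. \<forall>g\<in>Alg B. gb (dd f) (dd g) = dd (anchor gb (dd f) g))
    \<and> (\<forall>a b \<alpha> \<beta>. \<alpha> \<in> B 1 a \<longrightarrow> \<beta> \<in> B 1 b \<longrightarrow>
         gb \<alpha> \<beta> = ip (anchor gb \<alpha>) (dd \<beta>)
                   - msgn (pint a * pint b) *\<^sub>R ip (anchor gb \<beta>) (dd \<alpha>)
                   + dd (ip (anchor gb \<alpha>) \<beta>))
    \<and> poisson_type B wed dd ip (anchor gb) gb"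
proof -
  interpret SFA B wed gb one dd ip using assms by unfold_locales
  show ?thesis using skewA poisson C2 C3 unfolding anchor_def by blast
qed


end
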